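(* In the setting described in the context, if $\tau$ is the random slot allocation, then $\mathbb E\left[\sum_{k\in U}f_\tau(k)w_k\right]\ge(1-e^{-\delta})R$, where $R$ is the maximum total reward of a feasible service placement.
   Context: An SPSC instance: finite sets $S$ (services), $V$ (nodes), $U$ (users); sizes $s_i>0$; capacities $c_j>0$; for each user $k$ a service $i_k\in S$, a set $T_k\subseteq V$, a reward $w_k>0$. A service placement $X=\{X_i\subseteq V:i\in S\}$ is feasible iff $\sum_is_i\mathbf 1[j\in X_i]\le c_j$ for all $j$; its total reward is $\sum_kw_k\mathbf 1[T_k\cap X_{i_k}\ne\emptyset]$. Let $\{x_{ij}\},\{y_k\}$ be an optimal solution of the LP with nonnegative variables: maximize $\sum_ky_kw_k$ s.t. $y_k\le\sum_{j\in T_k}x_{i_kj}$, $y_k\le1$; $\sum_ix_{ij}s_i\le c_j$; $x_{ij}=0$ if $s_i>c_j$; $0\le x_{ij}\le1$. Fix $\beta<1$ with $\max_is_i\le\beta\min_jc_j$; $\gamma:=1-\sqrt\beta$, $\delta:=(1-\sqrt\beta)^2$, $\mathbb N=\{1,2,\dots\}$. For $j\in V,q\in\mathbb N$: $P_j^q:=\{i:\gamma^qc_j\beta<s_i\le\gamma^{q-1}c_j\beta\}$, $d_j^q:=\sum_{i\in P_j^q}x_{ij}$, $v_j:=\delta c_j/\sum_is_ix_{ij}$, $n_j^q:=\lceil v_jd_j^q\rceil$. Slot set $\Lambda$: for every $j,q$ with $P_j^q\ne\emptyset$, $n_j^q$ slots $\sigma$ with node $\nu(\sigma)=j$, class $\kappa(\sigma)=q$.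 A slot allocation is $\tau:\Lambda\to S$ with $\tau(\sigma)\in P^{\kappa(\sigma)}_{\nu(\sigma)}$; $X^\tau_i:=\{j:\exists\sigma,\nu(\sigma)=j,\tau(\sigma)=i\}$; $f_\tau(k):=\mathbf 1[T_k\cap X^\tau_{i_k}\ne\emptyset]$. The random slot allocation: for each slot $\sigma$ independently, $\tau(\sigma)=i$ with probability $x_{i\nu(\sigma)}/d^{\kappa(\sigma)}_{\nu(\sigma)}$ for $i\in P^{\kappa(\sigma)}_{\nu(\sigma)}$. *)

theory Defs
  imports Complex_Main "HOL-Library.FuncSet"
begin

text \<open>SPSC instance: services S (type 's), nodes V (type 'v), users U (type 'u);
  sizes s, capacities c, requested service svc k (= i_k), node sets T k, rewards w k.\<close>

definition lp_feasible ::
  "'s set \<Rightarrow> 'v set \<Rightarrow> 'u set \<Rightarrow> ('s \<Rightarrow> real) \<Rightarrow> ('v \<Rightarrow> real) \<Rightarrow> ('u \<Rightarrow> 's) \<Rightarrow> ('u \<Rightarrow> 'v set)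
   \<Rightarrow> ('s \<Rightarrow> 'v \<Rightarrow> real) \<Rightarrow> ('u \<Rightarrow> real) \<Rightarrow> bool" where
  "lp_feasible S V U s c svc T x y \<longleftrightarrow>
     (\<forall>k\<in>U. 0 \<le> y k \<and> y k \<le> (\<Sum>j\<in>T k. x (svc k) j) \<and> y k \<le> 1) \<and>
     (\<forall>j\<in>V. (\<Sum>i\<in>S. x i j * s i) \<le> c j) \<and>
     (\<forall>i\<in>S. \<forall>j\<in>V. s i > c j \<longrightarrow> x i j = 0) \<and>
     (\<forall>i\<in>S. \<forall>j\<in>V. 0 \<le> x i j \<and> x i j \<le> 1)"

definition lp_objective :: "'u set \<Rightarrow> ('u \<Rightarrow> real) \<Rightarrow> ('u \<Rightarrow> real) \<Rightarrow> real" where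
  "lp_objective U w y = (\<Sum>k\<in>U. y k * w k)"

definition lp_optimal ::
  "'s set \<Rightarrow> 'v set \<Rightarrow> 'u set \<Rightarrow> ('s \<Rightarrow> real) \<Rightarrow> ('v \<Rightarrow> real) \<Rightarrow> ('u \<Rightarrow> 's) \<Rightarrow> ('u \<Rightarrow> 'v set)
   \<Rightarrow> ('u \<Rightarrow> real) \<Rightarrow> ('s \<Rightarrow> 'v \<Rightarrow> real) \<Rightarrow> ('u \<Rightarrow> real) \<Rightarrow> bool" where
  "lp_optimal S V U s c svc T w x y \<longleftrightarrow>
     lp_feasible S V U s c svc T x y \<and>
     (\<forall>x' y'. lp_feasible S V U s c svc T x' y' \<longrightarrow> lp_objective U w y' \<le> lp_objective U w y)"

definition feasible_placement ::
  "'s set \<Rightarrow> 'v set \<Rightarrow> ('s \<Rightarrow> real) \<Rightarrow> ('v \<Rightarrow> real) \<Rightarrow> ('s \<Rightarrow> 'v set) \<Rightarrow> bool" where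
  "feasible_placement S V s c X \<longleftrightarrow>
     (\<forall>i\<in>S. X i \<subseteq> V) \<and> (\<forall>j\<in>V. (\<Sum>i\<in>S. s i * (if j \<in> X i then 1 else 0)) \<le> c j)"

definition placement_reward ::
  "'u set \<Rightarrow> ('u \<Rightarrow> real) \<Rightarrow> ('u \<Rightarrow> 's) \<Rightarrow> ('u \<Rightarrow> 'v set) \<Rightarrow> ('s \<Rightarrow> 'v set) \<Rightarrow> real" where
  "placement_reward U w svc T X = (\<Sum>k\<in>U. w k * (if T k \<inter> X (svc k) \<noteq> {} then 1 else 0))"

definition opt_reward ::
  "'s set \<Rightarrow> 'v set \<Rightarrow> 'u set \<Rightarrow> ('s \<Rightarrow> real) \<Rightarrow> ('v \<Rightarrow> real) \<Rightarrow> ('u \<Rightarrow> real) \<Rightarrow> ('u \<Rightarrow> 's)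
   \<Rightarrow> ('u \<Rightarrow> 'v set) \<Rightarrow> real" where
  "opt_reward S V U s c w svc T =
     Max {placement_reward U w svc T X | X. feasible_placement S V s c X}"

text \<open>gamma = 1 - sqrt beta, delta = (1 - sqrt beta)^2. Classes are indexed by q >= 1.\<close>

definition cls :: "'s set \<Rightarrow> ('s \<Rightarrow> real) \<Rightarrow> ('v \<Rightarrow> real) \<Rightarrow> real \<Rightarrow> 'v \<Rightarrow> nat \<Rightarrow> 's set" where
  "cls S s c \<beta> j q =
     {i\<in>S. (1 - sqrt \<beta>) ^ q * c j * \<beta> < s i \<and> s i \<le> (1 - sqrt \<beta>) ^ (q - 1) * c j * \<beta>}"

definition dmass ::
  "'s set \<Rightarrow> ('s \<Rightarrow> real) \<Rightarrow> ('v \<Rightarrow> real) \<Rightarrow> real \<Rightarrow> ('s \<Rightarrow> 'v \<Rightarrow> real) \<Rightarrow> 'v \<Rightarrow> nat \<Rightarrow> real" where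
  "dmass S s c \<beta> x j q = (\<Sum>i\<in>cls S s c \<beta> j q. x i j)"

definition vfac :: "'s set \<Rightarrow> ('s \<Rightarrow> real) \<Rightarrow> ('v \<Rightarrow> real) \<Rightarrow> real \<Rightarrow> ('s \<Rightarrow> 'v \<Rightarrow> real) \<Rightarrow> 'v \<Rightarrow> real" where
  "vfac S s c \<beta> x j = (1 - sqrt \<beta>) ^ 2 * c j / (\<Sum>i\<in>S. s i * x i j)"

definition nslots ::
  "'s set \<Rightarrow> ('s \<Rightarrow> real) \<Rightarrow> ('v \<Rightarrow> real) \<Rightarrow> real \<Rightarrow> ('s \<Rightarrow> 'v \<Rightarrow> real) \<Rightarrow> 'v \<Rightarrow> nat \<Rightarrow> nat" where
  "nslots S s c \<beta> x j q = nat \<lceil>vfac S s c \<beta> x j * dmass S s c \<beta> x j q\<rceil>"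

definition slots ::
  "'s set \<Rightarrow> 'v set \<Rightarrow> ('s \<Rightarrow> real) \<Rightarrow> ('v \<Rightarrow> real) \<Rightarrow> real \<Rightarrow> ('s \<Rightarrow> 'v \<Rightarrow> real) \<Rightarrow> ('v \<times> nat \<times> nat) set" where
  "slots S V s c \<beta> x =
     {(j, q, m). j \<in> V \<and> 1 \<le> q \<and> cls S s c \<beta> j q \<noteq> {} \<and> m < nslots S s c \<beta> x j q}"

definition allocations ::
  "'s set \<Rightarrow> 'v set \<Rightarrow> ('s \<Rightarrow> real) \<Rightarrow> ('v \<Rightarrow> real) \<Rightarrow> real \<Rightarrow> ('s \<Rightarrow> 'v \<Rightarrow> real) \<Rightarrow> ('v \<times> nat \<times> nat \<Rightarrow> 's) set" where
  "allocations S V s c \<beta> x = PiE (slots S V s c \<beta> x) (\<lambda>\<sigma>. cls S s c \<beta> (fst \<sigma>) (fst (snd \<sigma>)))"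

definition placed ::
  "'s set \<Rightarrow> 'v set \<Rightarrow> ('s \<Rightarrow> real) \<Rightarrow> ('v \<Rightarrow> real) \<Rightarrow> real \<Rightarrow> ('s \<Rightarrow> 'v \<Rightarrow> real) \<Rightarrow> ('v \<times> nat \<times> nat \<Rightarrow> 's) \<Rightarrow> 's \<Rightarrow> 'v set" where
  "placed S V s c \<beta> x \<tau> i = {j. \<exists>\<sigma>\<in>slots S V s c \<beta> x. fst \<sigma> = j \<and> \<tau> \<sigma> = i}"

text \<open>Probability of an allocation under the random slot allocation: independent slots,
  slot sigma gets service i with probability x_{i,nu(sigma)} / d_{nu(sigma)}^{kappa(sigma)}.\<close>

definition alloc_prob ::
  "'s set \<Rightarrow> 'v set \<Rightarrow> ('s \<Rightarrow> real) \<Rightarrow> ('v \<Rightarrow> real) \<Rightarrow> real \<Rightarrow> ('s \<Rightarrow> 'v \<Rightarrow> real) \<Rightarrow> ('v \<times> nat \<times> nat \<Rightarrow> 's) \<Rightarrow> real" where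
  "alloc_prob S V s c \<beta> x \<tau> =
     (\<Prod>\<sigma>\<in>slots S V s c \<beta> x. x (\<tau> \<sigma>) (fst \<sigma>) / dmass S s c \<beta> x (fst \<sigma>) (fst (snd \<sigma>)))"

definition expected_reward ::
  "'s set \<Rightarrow> 'v set \<Rightarrow> 'u set \<Rightarrow> ('s \<Rightarrow> real) \<Rightarrow> ('v \<Rightarrow> real) \<Rightarrow> ('u \<Rightarrow> real) \<Rightarrow> ('u \<Rightarrow> 's)
   \<Rightarrow> ('u \<Rightarrow> 'v set) \<Rightarrow> real \<Rightarrow> ('s \<Rightarrow> 'v \<Rightarrow> real) \<Rightarrow> real" where
  "expected_reward S V U s c w svc T \<beta> x =
     (\<Sum>\<tau>\<in>allocations S V s c \<beta> x. alloc_prob S V s c \<beta> x \<tau> *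
        (\<Sum>k\<in>U. (if T k \<inter> placed S V s c \<beta> x \<tau> (svc k) \<noteq> {} then 1 else 0) * w k))"

end

theory Submission
  imports Defs "HOL-Analysis.Analysis"
begin

lemma prob_lemma:
  fixes p :: "'a \<Rightarrow> 'b \<Rightarrow> real"
  assumes fA: "finite A" and fB: "\<And>a. a \<in> A \<Longrightarrow> finite (B a)"
    and p1: "\<And>a. a \<in> A \<Longrightarrow> (\<Sum>b\<in>B a. p a b) = 1"
  shows "(\<Sum>\<tau>\<in>PiE A B. (\<Prod>a\<in>A. p a (\<tau> a)) * (if \<exists>a\<in>A. Q a \<and> \<tau> a = i then 1 else 0))
     = 1 - (\<Prod>a\<in>A. 1 - (if Q a \<and> i \<in> B a then p a i else 0))"
proof -
  define h where "h a b = (if Q a \<and> b = i then 0 else (1::real))" for a b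
  have hprod: "(\<Prod>a\<in>A. h a (\<tau> a)) = 1 - (if \<exists>a\<in>A. Q a \<and> \<tau> a = i then 1 else 0)" for \<tau>
  proof (cases "\<exists>a\<in>A. Q a \<and> \<tau> a = i")
    case True
    then obtain a where "a \<in> A" "Q a" "\<tau> a = i" by blast
    then have "(\<Prod>a\<in>A. h a (\<tau> a)) = 0" using fA by (auto simp: h_def prod_zero_iff)
    then show ?thesis using True by simp
  next
    case False
    then show ?thesis by (auto simp: h_def intro!: prod.neutral)
  qed
  have s1: "(\<Sum>\<tau>\<in>PiE A B. (\<Prod>a\<in>A. p a (\<tau> a))) = 1"
  proof -
    have "(\<Prod>a\<in>A. \<Sum>b\<in>B a. p a b) = (\<Sum>\<tau>\<in>PiE A B. (\<Prod>a\<in>A. p a (\<tau> a)))"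
      by (rule prod_sum_PiE) (use fA fB in auto)
    then show ?thesis using p1 by simp
  qed
  have s2: "(\<Sum>\<tau>\<in>PiE A B. (\<Prod>a\<in>A. p a (\<tau> a) * h a (\<tau> a)))
        = (\<Prod>a\<in>A. 1 - (if Q a \<and> i \<in> B a then p a i else 0))"
  proof -
    have "(\<Sum>\<tau>\<in>PiE A B. (\<Prod>a\<in>A. p a (\<tau> a) * h a (\<tau> a))) = (\<Prod>a\<in>A. \<Sum>b\<in>B a. p a b * h a b)"
      by (rule prod_sum_PiE[symmetric]) (use fA fB in auto)
    also have "\<dots> = (\<Prod>a\<in>A. 1 - (if Q a \<and> i \<in> B a then p a i else 0))"
    proof (rule prod.cong[OF refl])
      fix a assume a: "a \<in> A"
      have "(\<Sum>b\<in>B a. p a b * h a b) = (\<Sum>b\<in>B a. p a b - (if b = i then (if Q a then p a b else 0) else 0))"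
        by (rule sum.cong) (auto simp: h_def)
      also have "\<dots> = (\<Sum>b\<in>B a. p a b) - (\<Sum>b\<in>B a. (if b = i then (if Q a then p a b else 0) else 0))"
        by (simp add: sum_subtractf)
      also have "\<dots> = 1 - (if Q a \<and> i \<in> B a then p a i else 0)"
        using p1[OF a] sum.delta[OF fB[OF a], of i "\<lambda>b. if Q a then p a b else 0"] by auto
      finally show "(\<Sum>b\<in>B a. p a b * h a b) = 1 - (if Q a \<and> i \<in> B a then p a i else 0)" .
    qed
    finally show ?thesis .
  qed
  have "(\<Sum>\<tau>\<in>PiE A B. (\<Prod>a\<in>A. p a (\<tau> a)) * (if \<exists>a\<in>A. Q a \<and> \<tau> a = i then 1 else 0))
     = (\<Sum>\<tau>\<in>PiE A B. (\<Prod>a\<in>A. p a (\<tau> a)) - (\<Prod>a\<in>A. p a (\<tau> a) * h a (\<tau> a)))"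
    by (rule sum.cong[OF refl]) (simp add: prod.distrib hprod algebra_simps)
  also have "\<dots> = 1 - (\<Prod>a\<in>A. 1 - (if Q a \<and> i \<in> B a then p a i else 0))"
    by (simp add: sum_subtractf s1 s2)
  finally show ?thesis .
qed

lemma exp_ineq:
  fixes y d :: real
  assumes "0 \<le> y" "y \<le> 1"
  shows "(1 - exp (- d)) * y \<le> 1 - exp (- d * y)"
proof -
  have "exp ((1 - y) *\<^sub>R 0 + y *\<^sub>R (- d)) \<le> (1 - y) * exp 0 + y * exp (- d)"
    using convex_onD[OF exp_convex, of y 0 "-d"] assms by simp
  then show ?thesis by (simp add: algebra_simps)
qed

lemma prod_bound:
  fixes e :: "'a \<Rightarrow> real"
  assumes "finite A" "\<And>a. a \<in> A \<Longrightarrow> 0 \<le> e a \<and> e a \<le> 1"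
  shows "(\<Prod>a\<in>A. 1 - e a) \<le> exp (- (\<Sum>a\<in>A. e a))"
proof -
  have "(\<Prod>a\<in>A. 1 - e a) \<le> (\<Prod>a\<in>A. exp (- e a))"
    apply (rule prod_mono) using assms(2) exp_ge_add_one_self[of "- e _"] by force
  also have "\<dots> = exp (- (\<Sum>a\<in>A. e a))"
    using exp_sum[OF assms(1), of "\<lambda>a. - e a"] by (simp add: sum_negf)
  finally show ?thesis .
qed

lemma cls_exists:
  assumes "0 < \<beta>" "\<beta> < 1" "0 < s i" "s i \<le> \<beta> * c j" "c j > 0" "i \<in> S"
  shows "\<exists>q\<ge>1. i \<in> cls S s c \<beta> j q"
proof -
  define g where "g = 1 - sqrt \<beta>"
  have g: "0 < g" "g < 1" using assms(1,2) by (auto simp: g_def)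
  have pos: "0 < s i / (c j * \<beta>)" using assms by simp
  obtain N where N: "g ^ N < s i / (c j * \<beta>)" using real_arch_pow_inv[OF pos g(2)] by blast
  define P where "P q = (g ^ q * c j * \<beta> < s i)" for q
  have PN: "P N" using N assms by (simp add: P_def field_simps)
  define q where "q = (LEAST q. P q)"
  have Pq: "P q" unfolding q_def by (rule LeastI[of P N, OF PN])
  have q0: "q \<noteq> 0"
  proof
    assume "q = 0"
    then have "c j * \<beta> < s i" using Pq by (simp add: P_def)
    then show False using assms(4) by (simp add: mult.commute)
  qed
  have "\<not> P (q - 1)" using q0 not_less_Least[of "q - 1" P] unfolding q_def by fastforce
  then have "i \<in> cls S s c \<beta> j q" using Pq assms(6) by (simp add: cls_def P_def g_def)
  then show ?thesis using q0 by (intro exI[of _ q]) auto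
qed

lemma cls_finite:
  assumes "0 < \<beta>" "\<beta> < 1" "c j > 0" "finite S" "\<forall>i\<in>S. s i > 0"
  shows "finite {q. cls S s c \<beta> j q \<noteq> {}}"
proof -
  define g where "g = 1 - sqrt \<beta>"
  have g: "0 < g" "g < 1" using assms(1,2) by (auto simp: g_def)
  have "finite {q. i \<in> cls S s c \<beta> j q}" if i: "i \<in> S" for i
  proof -
    have pos: "0 < s i / (c j * \<beta>)" using assms i by simp
    obtain N where N: "g ^ N < s i / (c j * \<beta>)" using real_arch_pow_inv[OF pos g(2)] by blast
    then have N': "g ^ N * c j * \<beta> < s i" using assms by (simp add: field_simps)
    have "{q. i \<in> cls S s c \<beta> j q} \<subseteq> {..N}"
    proof
      fix q assume "q \<in> {q. i \<in> cls S s c \<beta> j q}"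
      then have le: "s i \<le> g ^ (q - 1) * c j * \<beta>" by (simp add: cls_def g_def)
      show "q \<in> {..N}"
      proof (rule ccontr)
        assume "q \<notin> {..N}"
        then have "N \<le> q - 1" by auto
        then have "g ^ (q - 1) \<le> g ^ N" using g by (simp add: power_decreasing)
        then have "g ^ (q - 1) * c j * \<beta> \<le> g ^ N * c j * \<beta>" using assms by simp
        then show False using le N' by simp
      qed
    qed
    then show ?thesis by (rule finite_subset) simp
  qed
  moreover have "{q. cls S s c \<beta> j q \<noteq> {}} = (\<Union>i\<in>S. {q. i \<in> cls S s c \<beta> j q})"
    by (auto simp: cls_def)
  ultimately show ?thesis using assms(4) by simp
qed

lemma opt_le_lp:
  assumes "finite V" "finite U" "\<forall>i\<in>S. s i > 0" "\<forall>j\<in>V. c j > 0"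
    and "\<forall>k\<in>U. svc k \<in> S \<and> T k \<subseteq> V \<and> w k > 0"
    and "lp_optimal S V U s c svc T w x y" and fS: "finite S"
  shows "opt_reward S V U s c w svc T \<le> lp_objective U w y"
proof -
  let ?R = "{placement_reward U w svc T X | X. feasible_placement S V s c X}"
  have sub: "?R \<subseteq> (\<lambda>K. \<Sum>k\<in>K. w k) ` Pow U"
  proof
    fix r assume "r \<in> ?R"
    then obtain X where r: "r = placement_reward U w svc T X" by blast
    have "r = (\<Sum>k\<in>{k\<in>U. T k \<inter> X (svc k) \<noteq> {}}. w k)"
      unfolding r placement_reward_def sum.inter_filter[OF assms(2)] by (rule sum.cong) auto
    then show "r \<in> (\<lambda>K. \<Sum>k\<in>K. w k) ` Pow U" by blast
  qed
  have fin: "finite ?R" using finite_subset[OF sub] assms(2) by blast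
  have ne: "?R \<noteq> {}"
  proof -
    have "feasible_placement S V s c (\<lambda>_. {})" using assms(4)
      by (auto simp: feasible_placement_def less_imp_le)
    then show ?thesis by blast
  qed
  have "r \<le> lp_objective U w y" if "r \<in> ?R" for r
  proof -
    obtain X where r: "r = placement_reward U w svc T X" and X: "feasible_placement S V s c X"
      using \<open>r \<in> ?R\<close> by blast
    define x' where "x' i j = (if j \<in> X i then 1 else (0::real))" for i j
    define y' where "y' k = (if T k \<inter> X (svc k) \<noteq> {} then 1 else (0::real))" for k
    have cap: "(\<Sum>i\<in>S. x' i j * s i) \<le> c j" if "j \<in> V" for j
      using X that by (simp add: feasible_placement_def x'_def mult.commute)
    have "lp_feasible S V U s c svc T x' y'"
      unfolding lp_feasible_def
    proof (intro conjI ballI impI)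
      fix k assume k: "k \<in> U"
      show "0 \<le> y' k" "y' k \<le> 1" by (auto simp: y'_def)
      have fT: "finite (T k)" using assms(1,5) k finite_subset by blast
      show "y' k \<le> (\<Sum>j\<in>T k. x' (svc k) j)"
      proof (cases "T k \<inter> X (svc k) = {}")
        case True then show ?thesis by (simp add: y'_def x'_def sum_nonneg)
      next
        case False
        then obtain j where j: "j \<in> T k" "j \<in> X (svc k)" by blast
        have "x' (svc k) j \<le> (\<Sum>j\<in>T k. x' (svc k) j)"
          by (rule member_le_sum) (use j fT in \<open>auto simp: x'_def\<close>)
        then show ?thesis using j by (simp add: y'_def x'_def)
      qed
    next
      fix j assume "j \<in> V" then show "(\<Sum>i\<in>S. x' i j * s i) \<le> c j" by (rule cap)
    next
      fix i j assume i: "i \<in> S" and j: "j \<in> V" and gt: "s i > c j"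
      show "x' i j = 0"
      proof (rule ccontr)
        assume "x' i j \<noteq> 0"
        then have "j \<in> X i" by (simp add: x'_def split: if_splits)
        have "x' i j * s i \<le> (\<Sum>i\<in>S. x' i j * s i)"
          by (rule member_le_sum) (use i fS assms(3) in \<open>auto simp: x'_def\<close>)
        then show False using cap[OF j] gt \<open>j \<in> X i\<close> by (simp add: x'_def)
      qed
    next
      fix i j assume "i \<in> S" "j \<in> V"
      then show "0 \<le> x' i j" "x' i j \<le> 1" by (auto simp: x'_def)
    qed
    then have "lp_objective U w y' \<le> lp_objective U w y"
      using assms(6) by (simp add: lp_optimal_def)
    moreover have "lp_objective U w y' = r"
      by (simp add: r lp_objective_def placement_reward_def y'_def mult.commute)
    ultimately show ?thesis by simp
  qed
  then show ?thesis unfolding opt_reward_def using fin ne by (intro Max.boundedI) auto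
qed

theorem theorem5:
  fixes S :: "'s set" and V :: "'v set" and U :: "'u set"
    and s :: "'s \<Rightarrow> real" and c :: "'v \<Rightarrow> real"
    and svc :: "'u \<Rightarrow> 's" and T :: "'u \<Rightarrow> 'v set" and w :: "'u \<Rightarrow> real"
    and x :: "'s \<Rightarrow> 'v \<Rightarrow> real" and y :: "'u \<Rightarrow> real" and \<beta> :: real
  assumes "finite S" and "finite V" and "finite U"
    and "\<forall>i\<in>S. s i > 0" and "\<forall>j\<in>V. c j > 0"
    and "\<forall>k\<in>U. svc k \<in> S \<and> T k \<subseteq> V \<and> w k > 0"
    and "lp_optimal S V U s c svc T w x y"
    and "\<beta> < 1" and "\<forall>i\<in>S. \<forall>j\<in>V. s i \<le> \<beta> * c j"
  shows "expected_reward S V U s c w svc T \<beta> x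
           \<ge> (1 - exp (- ((1 - sqrt \<beta>) ^ 2))) * opt_reward S V U s c w svc T"
proof -
  note fS = assms(1) and fV = assms(2) and fU = assms(3) and spos = assms(4) and cpos = assms(5)
    and uk = assms(6) and lpo = assms(7) and b1 = assms(8) and sb = assms(9)
  define \<delta> where "\<delta> = (1 - sqrt \<beta>) ^ 2"
  have \<delta>0: "0 \<le> \<delta>" by (simp add: \<delta>_def)
  have lpf: "lp_feasible S V U s c svc T x y" using lpo by (simp add: lp_optimal_def)
  have xb: "\<And>i j. i \<in> S \<Longrightarrow> j \<in> V \<Longrightarrow> 0 \<le> x i j \<and> x i j \<le> 1"
    using lpf by (simp add: lp_feasible_def)
  have cap: "\<And>j. j \<in> V \<Longrightarrow> (\<Sum>i\<in>S. x i j * s i) \<le> c j"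
    using lpf by (simp add: lp_feasible_def)
  have yb: "\<And>k. k \<in> U \<Longrightarrow> 0 \<le> y k \<and> y k \<le> (\<Sum>j\<in>T k. x (svc k) j) \<and> y k \<le> 1"
    using lpf by (simp add: lp_feasible_def)
  have opt: "opt_reward S V U s c w svc T \<le> lp_objective U w y"
    by (rule opt_le_lp) (use assms in auto)
  have e0: "0 \<le> 1 - exp (- \<delta>)" using \<delta>0 by simp
  have main: "(1 - exp (- \<delta>)) * lp_objective U w y \<le> expected_reward S V U s c w svc T \<beta> x"
  proof (cases "S = {} \<or> V = {}")
    case True
    have y0: "y k = 0" if "k \<in> U" for k
    proof -
      have "T k = {}" using True uk that by auto
      then show ?thesis using yb[OF that] by simp
    qed
    have "lp_objective U w y = 0" by (simp add: lp_objective_def y0)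
    moreover have "expected_reward S V U s c w svc T \<beta> x = 0"
    proof -
      have "(\<Sum>k\<in>U. (if T k \<inter> placed S V s c \<beta> x \<tau> (svc k) \<noteq> {} then 1 else 0) * w k) = 0" for \<tau>
      proof (rule sum.neutral, rule ballI)
        fix k assume "k \<in> U"
        then have "T k = {}" using True uk by auto
        then show "(if T k \<inter> placed S V s c \<beta> x \<tau> (svc k) \<noteq> {} then 1 else 0) * w k = 0" by simp
      qed
      then show ?thesis by (simp add: expected_reward_def)
    qed
    ultimately show ?thesis by simp
  next
    case False
    then obtain i0 j0 where "i0 \<in> S" "j0 \<in> V" by blast
    then have bpos: "0 < \<beta>" using spos cpos sb
      by (metis less_le_trans zero_less_mult_pos2)
    define A where "A = slots S V s c \<beta> x"
    define B where "B \<sigma> = cls S s c \<beta> (fst \<sigma>) (fst (snd \<sigma>))" for \<sigma> :: "'v \<times> nat \<times> nat"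
    define d where "d j q = dmass S s c \<beta> x j q" for j q
    define p where "p \<sigma> b = x b (fst \<sigma>) / d (fst \<sigma>) (fst (snd \<sigma>))" for \<sigma> :: "'v \<times> nat \<times> nat" and b
    have clsS: "cls S s c \<beta> j q \<subseteq> S" for j q by (auto simp: cls_def)
    have fA: "finite A"
    proof -
      have "A \<subseteq> Sigma V (\<lambda>j. Sigma {q. cls S s c \<beta> j q \<noteq> {}} (\<lambda>q. {..<nslots S s c \<beta> x j q}))"
        by (auto simp: A_def slots_def)
      moreover have "finite (Sigma V (\<lambda>j. Sigma {q. cls S s c \<beta> j q \<noteq> {}} (\<lambda>q. {..<nslots S s c \<beta> x j q})))"
        using fV cls_finite[OF bpos b1 _ fS spos, where c=c] cpos by (intro finite_SigmaI) auto
      ultimately show ?thesis by (rule finite_subset)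
    qed
    have fB: "finite (B \<sigma>)" for \<sigma> using clsS fS finite_subset unfolding B_def by blast
    have dnn: "0 \<le> d j q" if "j \<in> V" for j q
      unfolding d_def dmass_def using clsS xb that by (intro sum_nonneg) blast
    have dpos: "0 < d (fst \<sigma>) (fst (snd \<sigma>))" if "\<sigma> \<in> A" for \<sigma>
    proof -
      obtain j q m where \<sigma>: "\<sigma> = (j, q, m)" by (cases \<sigma>) auto
      have j: "j \<in> V" and m: "m < nslots S s c \<beta> x j q" using that by (auto simp: A_def slots_def \<sigma>)
      have "d j q \<noteq> 0"
      proof
        assume "d j q = 0"
        then have "nslots S s c \<beta> x j q = 0" by (simp add: nslots_def d_def)
        then show False using m by simp
      qed
      then show ?thesis using dnn[OF j, of q] \<sigma> by simp
    qed
    have p1: "(\<Sum>b\<in>B \<sigma>. p \<sigma> b) = 1" if "\<sigma> \<in> A" for \<sigma>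
      using dpos[OF that] unfolding p_def
      by (simp add: sum_divide_distrib[symmetric] d_def dmass_def B_def)
    have AV: "fst \<sigma> \<in> V" if "\<sigma> \<in> A" for \<sigma> using that by (auto simp: A_def slots_def)
    have pb: "0 \<le> p \<sigma> b \<and> p \<sigma> b \<le> 1" if "\<sigma> \<in> A" "b \<in> B \<sigma>" for \<sigma> b
    proof -
      have b: "b \<in> S" using that clsS unfolding B_def by blast
      have "x b (fst \<sigma>) \<le> d (fst \<sigma>) (fst (snd \<sigma>))"
        unfolding d_def dmass_def using that fB[of \<sigma>] xb AV[OF that(1)] clsS
        by (intro member_le_sum) (auto simp: B_def intro: xb[THEN conjunct1] dest: subsetD[OF clsS])
      then show ?thesis using dpos[OF that(1)] xb[OF b AV[OF that(1)]] by (simp add: p_def)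
    qed
    define e where "e k \<sigma> = (if fst \<sigma> \<in> T k \<and> svc k \<in> B \<sigma> then p \<sigma> (svc k) else 0)" for k \<sigma>
    have Eeq: "expected_reward S V U s c w svc T \<beta> x = (\<Sum>k\<in>U. w k * (1 - (\<Prod>\<sigma>\<in>A. 1 - e k \<sigma>)))"
    proof -
      have pl: "(T k \<inter> placed S V s c \<beta> x \<tau> (svc k) \<noteq> {}) = (\<exists>\<sigma>\<in>A. fst \<sigma> \<in> T k \<and> \<tau> \<sigma> = svc k)" for k \<tau>
        by (auto simp: placed_def A_def)
      have "expected_reward S V U s c w svc T \<beta> x =
         (\<Sum>\<tau>\<in>PiE A B. (\<Prod>\<sigma>\<in>A. p \<sigma> (\<tau> \<sigma>)) *
            (\<Sum>k\<in>U. (if \<exists>\<sigma>\<in>A. fst \<sigma> \<in> T k \<and> \<tau> \<sigma> = svc k then 1 else 0) * w k))"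
        unfolding expected_reward_def allocations_def alloc_prob_def pl
        by (simp add: A_def B_def[abs_def] p_def d_def)
      also have "\<dots> = (\<Sum>k\<in>U. w k * (\<Sum>\<tau>\<in>PiE A B. (\<Prod>\<sigma>\<in>A. p \<sigma> (\<tau> \<sigma>)) *
            (if \<exists>\<sigma>\<in>A. fst \<sigma> \<in> T k \<and> \<tau> \<sigma> = svc k then 1 else 0)))"
        by (simp add: sum_distrib_left sum.swap[of _ U] algebra_simps)
      also have "\<dots> = (\<Sum>k\<in>U. w k * (1 - (\<Prod>\<sigma>\<in>A. 1 - e k \<sigma>)))"
      proof (rule sum.cong[OF refl])
        fix k
        show "w k * (\<Sum>\<tau>\<in>PiE A B. (\<Prod>\<sigma>\<in>A. p \<sigma> (\<tau> \<sigma>)) *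
            (if \<exists>\<sigma>\<in>A. fst \<sigma> \<in> T k \<and> \<tau> \<sigma> = svc k then 1 else 0)) = w k * (1 - (\<Prod>\<sigma>\<in>A. 1 - e k \<sigma>))"
          using prob_lemma[of A B p "\<lambda>\<sigma>. fst \<sigma> \<in> T k" "svc k", OF fA fB p1]
          by (simp add: e_def)
      qed
      finally show ?thesis .
    qed
    have bound: "(1 - exp (- \<delta>)) * y k \<le> 1 - (\<Prod>\<sigma>\<in>A. 1 - e k \<sigma>)" if k: "k \<in> U" for k
    proof -
      define i where "i = svc k"
      have iS: "i \<in> S" and TV: "T k \<subseteq> V" using uk k by (auto simp: i_def)
      have fT: "finite (T k)" using TV fV finite_subset by blast
      have enn: "0 \<le> e k \<sigma> \<and> e k \<sigma> \<le> 1" if "\<sigma> \<in> A" for \<sigma>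
        using pb[OF that] by (simp add: e_def)
      define J where "J = {j\<in>T k. 0 < x i j}"
      have "\<forall>j\<in>J. \<exists>q\<ge>1. i \<in> cls S s c \<beta> j q"
      proof
        fix j assume "j \<in> J"
        then have j: "j \<in> V" using TV by (auto simp: J_def)
        show "\<exists>q\<ge>1. i \<in> cls S s c \<beta> j q"
          by (rule cls_exists[OF bpos b1]) (use iS j spos cpos sb in auto)
      qed
      then obtain qf where qf: "\<forall>j\<in>J. qf j \<ge> 1 \<and> i \<in> cls S s c \<beta> j (qf j)" by metis
      define n where "n j = nslots S s c \<beta> x j (qf j)" for j
      define F :: "'v \<times> nat \<Rightarrow> 'v \<times> nat \<times> nat" where "F = (\<lambda>(j, m). (j, qf j, m))"
      define D where "D = Sigma J (\<lambda>j. {..<n j})"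
      have fJ: "finite J" using fT by (simp add: J_def)
      have fD: "finite D" using fJ by (simp add: D_def)
      have FD: "F ` D \<subseteq> A"
        using qf TV by (auto simp: F_def D_def A_def slots_def J_def n_def)
      have inj: "inj_on F D" by (auto simp: inj_on_def F_def)
      have eF: "e k (F (j, m)) = x i j / d j (qf j)" if "j \<in> J" for j m
        using that qf by (auto simp: e_def B_def p_def F_def J_def i_def)
      have perj: "\<delta> * x i j \<le> real (n j) * (x i j / d j (qf j))" if jJ: "j \<in> J" for j
      proof -
        have j: "j \<in> V" and xp: "0 < x i j" using jJ TV by (auto simp: J_def)
        have xd: "x i j \<le> d j (qf j)"
          unfolding d_def dmass_def using qf jJ fS clsS xb j
          by (intro member_le_sum) (auto intro: finite_subset xb[THEN conjunct1] dest: subsetD[OF clsS])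
        have dp: "0 < d j (qf j)" using xd xp by simp
        define \<Sigma> where "\<Sigma> = (\<Sum>i\<in>S. s i * x i j)"
        have "s i * x i j \<le> \<Sigma>"
          unfolding \<Sigma>_def using fS iS spos xb j
          by (intro member_le_sum) (auto intro!: mult_nonneg_nonneg simp: order.strict_implies_order)
        moreover have "0 < s i * x i j" using spos iS xp by simp
        ultimately have \<Sigma>p: "0 < \<Sigma>" by simp
        have \<Sigma>c: "\<Sigma> \<le> c j" using cap[OF j] by (simp add: \<Sigma>_def mult.commute)
        define v where "v = vfac S s c \<beta> x j"
        have v: "v = \<delta> * c j / \<Sigma>" by (simp add: v_def vfac_def \<delta>_def \<Sigma>_def)
        have "\<delta> \<le> v"
        proof -
          have "\<delta> * \<Sigma> \<le> \<delta> * c j" using \<Sigma>c \<delta>0 by (rule mult_left_mono)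
          then show ?thesis using \<Sigma>p by (simp add: v pos_le_divide_eq)
        qed
        have nv: "v * d j (qf j) \<le> real (n j)"
          unfolding n_def nslots_def v_def d_def by linarith
        have "\<delta> * x i j \<le> v * x i j" using \<open>\<delta> \<le> v\<close> xp by simp
        also have "\<dots> = (v * d j (qf j)) * (x i j / d j (qf j))" using dp by simp
        also have "\<dots> \<le> real (n j) * (x i j / d j (qf j))"
          using nv dp xp by (intro mult_right_mono) auto
        finally show ?thesis .
      qed
      have "\<delta> * (\<Sum>j\<in>T k. x i j) = \<delta> * (\<Sum>j\<in>J. x i j)"
      proof -
        have "(\<Sum>j\<in>T k. x i j) = (\<Sum>j\<in>J. x i j)"
        proof (rule sum.mono_neutral_right[OF fT])
          show "J \<subseteq> T k" by (auto simp: J_def)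
          show "\<forall>j\<in>T k - J. x i j = 0" using xb iS TV by (force simp: J_def)
        qed
        then show ?thesis by simp
      qed
      also have "\<dots> = (\<Sum>j\<in>J. \<delta> * x i j)" by (simp add: sum_distrib_left)
      also have "\<dots> \<le> (\<Sum>j\<in>J. real (n j) * (x i j / d j (qf j)))"
        using perj by (rule sum_mono)
      also have "\<dots> = (\<Sum>j\<in>J. \<Sum>m\<in>{..<n j}. e k (F (j, m)))"
        by (rule sum.cong[OF refl]) (simp add: eF)
      also have "\<dots> = (\<Sum>pr\<in>D. e k (F pr))"
        unfolding D_def using fJ by (subst sum.Sigma) (auto simp: case_prod_beta)
      also have "\<dots> = (\<Sum>\<sigma>\<in>F ` D. e k \<sigma>)"
        using sum.reindex[OF inj, of "e k"] by simp
      also have "\<dots> \<le> (\<Sum>\<sigma>\<in>A. e k \<sigma>)"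
        using enn FD fA by (intro sum_mono2) auto
      finally have sumb: "\<delta> * (\<Sum>j\<in>T k. x i j) \<le> (\<Sum>\<sigma>\<in>A. e k \<sigma>)" .
      have "\<delta> * y k \<le> \<delta> * (\<Sum>j\<in>T k. x i j)"
        using yb[OF k] \<delta>0 by (intro mult_left_mono) (auto simp: i_def)
      with sumb have ye: "\<delta> * y k \<le> (\<Sum>\<sigma>\<in>A. e k \<sigma>)" by linarith
      have "(\<Prod>\<sigma>\<in>A. 1 - e k \<sigma>) \<le> exp (- (\<Sum>\<sigma>\<in>A. e k \<sigma>))"
        using fA enn by (rule prod_bound)
      also have "\<dots> \<le> exp (- \<delta> * y k)" using ye by simp
      finally have "(\<Prod>\<sigma>\<in>A. 1 - e k \<sigma>) \<le> exp (- \<delta> * y k)" .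
      moreover have "(1 - exp (- \<delta>)) * y k \<le> 1 - exp (- \<delta> * y k)"
        using yb[OF k] by (intro exp_ineq) auto
      ultimately show ?thesis by linarith
    qed
    have "(1 - exp (- \<delta>)) * lp_objective U w y = (\<Sum>k\<in>U. w k * ((1 - exp (- \<delta>)) * y k))"
      by (simp add: lp_objective_def sum_distrib_left algebra_simps)
    also have "\<dots> \<le> (\<Sum>k\<in>U. w k * (1 - (\<Prod>\<sigma>\<in>A. 1 - e k \<sigma>)))"
      using bound uk by (intro sum_mono mult_left_mono) (auto simp: less_imp_le)
    finally show ?thesis using Eeq by simp
  qed
  have "(1 - exp (- \<delta>)) * opt_reward S V U s c w svc T \<le> (1 - exp (- \<delta>)) * lp_objective U w y"
    using opt e0 by (rule mult_left_mono)
  then show ?thesis using main by (simp add: \<delta>_def)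
qed

end
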